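(* Let $H$ be an abelian group with an alternating $\mathbb{Z}$-bilinear form $\langle-,-\rangle\neq0$. Let $K:\mathbb{Q}[H]\to\mathbb{Q}\otimes_{\mathbb{Z}}H$ be the $\mathbb{Q}$-linear map with $K([x])=1\otimes x$, and $\mathfrak g_K=\ker K$ (a Lie subalgebra of $\mathbb{Q}[H]$). Then the composition \[ H_2(\mathfrak g_K)\longrightarrow H_2(\mathbb{Q}[H])\longrightarrow H_2(\mathbb{Q}[H^{(1)}]) \] is surjective, where the first map is induced by the inclusion $\mathfrak g_K\hookrightarrow\mathbb{Q}[H]$ and the second is induced by the projection $\varpi^{(1)}:\mathbb{Q}[H]=\mathbb{Q}[\ker\mu]\oplus\mathbb{Q}[H^{(1)}]\to\mathbb{Q}[H^{(1)}]$.
   Context: $\mu:H\to\mathrm{Hom}_{\mathbb{Z}}(H,\mathbb{Z})$, $\mu(x)(y)=\langle x,y\rangle$; $H^{(1)}:=H\setminus\ker\mu$. $\mathbb{Q}[S]$ ($S\subset H$) is the $\mathbb{Q}$-vector space with basis symbols $[x]$, $x\in S$ (note $c[x]\ne[cx]$); $\mathbb{Q}[H]$ is a Lie algebra via $[[x],[y]]=\langle x,y\rangle[x+y]$, $\mathbb{Q}[\ker\mu]$ is its center and $\mathbb{Q}[H^{(1)}]$ its derived subalgebra, and $\varpi^{(1)}$ is a Lie algebra homomorphism. $H_2$ denotes Lie algebra homology with trivial coefficients $\mathbb{Q}$ (Chevalley–Eilenberg complex). *)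

theory Defs
  imports Complex_Main
begin

text \<open>
  Q[S] (S a subset of H) is modelled by finitely supported functions H -> rat
  vanishing outside S; the basis symbol [x] is delta x.
\<close>

definition supp :: "('b \<Rightarrow> rat) \<Rightarrow> 'b set" where
  "supp f = {x. f x \<noteq> 0}"

definition QS :: "'a set \<Rightarrow> ('a \<Rightarrow> rat) set" where
  "QS S = {f. finite (supp f) \<and> supp f \<subseteq> S}"

abbreviation QH :: "('a \<Rightarrow> rat) set" where
  "QH \<equiv> QS UNIV"

definition delta :: "'a \<Rightarrow> 'a \<Rightarrow> rat" where
  "delta x = (\<lambda>y. if y = x then 1 else 0)"

inductive_set qspan :: "('b \<Rightarrow> rat) set \<Rightarrow> ('b \<Rightarrow> rat) set" for S where
  zero: "(\<lambda>_. 0) \<in> qspan S"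
| add: "v \<in> S \<Longrightarrow> w \<in> qspan S \<Longrightarrow> (\<lambda>x. q * v x + w x) \<in> qspan S"

definition kermu :: "('a \<Rightarrow> 'a \<Rightarrow> int) \<Rightarrow> 'a set" where
  "kermu B = {x. \<forall>y. B x y = 0}"

definition H1 :: "('a \<Rightarrow> 'a \<Rightarrow> int) \<Rightarrow> 'a set" where
  "H1 B = UNIV - kermu B"

text \<open>Lie bracket on Q[H]: the bilinear extension of [[x],[y]] = <x,y>[x+y].\<close>
definition br :: "('a::ab_group_add \<Rightarrow> 'a \<Rightarrow> int) \<Rightarrow> ('a \<Rightarrow> rat) \<Rightarrow> ('a \<Rightarrow> rat) \<Rightarrow> 'a \<Rightarrow> rat" where
  "br B a b = (\<lambda>z. \<Sum>x\<in>supp a. a x * b (z - x) * of_int (B x (z - x)))"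

definition varpi1 :: "('a \<Rightarrow> 'a \<Rightarrow> int) \<Rightarrow> ('a \<Rightarrow> rat) \<Rightarrow> 'a \<Rightarrow> rat" where
  "varpi1 B f = (\<lambda>x. if x \<in> H1 B then f x else 0)"

text \<open>
  We use the presentation
  Q \<otimes>_Z H = Q[H] / span{[x+y] - [x] - [y]} (Q-vector space generated by
  the symbols [x] subject to additivity), under which K is the quotient map;
  hence g_K = ker K is that span.
\<close>
definition gK :: "('a::ab_group_add \<Rightarrow> rat) set" where
  "gK = qspan {(\<lambda>z. delta (x + y) z - delta x z - delta y z) | x y. True}"

text \<open>
  Exterior powers: Lambda^2 Q[H] is modelled by alternating finitely supported
  functions H x H -> rat, with a \<and> b = wedge2 a b; then
  c = 1/2 \<Sum>_(x,y) c(x,y) [x]\<and>[y].  Similarly Lambda^3 with wedge3 and factor 1/6.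
  For a subspace g of Q[H], Lambda^k g is the span of wedges of elements of g
  (inside Lambda^k Q[H]).
\<close>
definition wedge2 :: "('a \<Rightarrow> rat) \<Rightarrow> ('a \<Rightarrow> rat) \<Rightarrow> 'a \<times> 'a \<Rightarrow> rat" where
  "wedge2 a b = (\<lambda>(x, y). a x * b y - a y * b x)"

definition wedge3 :: "('a \<Rightarrow> rat) \<Rightarrow> ('a \<Rightarrow> rat) \<Rightarrow> ('a \<Rightarrow> rat) \<Rightarrow> 'a \<times> 'a \<times> 'a \<Rightarrow> rat" where
  "wedge3 a b c = (\<lambda>(x, y, z).
      a x * b y * c z + a y * b z * c x + a z * b x * c y
    - a x * b z * c y - a z * b y * c x - a y * b x * c z)"

definition Lambda2 :: "('a \<Rightarrow> rat) set \<Rightarrow> ('a \<times> 'a \<Rightarrow> rat) set" where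
  "Lambda2 g = qspan {wedge2 a b | a b. a \<in> g \<and> b \<in> g}"

definition Lambda3 :: "('a \<Rightarrow> rat) set \<Rightarrow> ('a \<times> 'a \<times> 'a \<Rightarrow> rat) set" where
  "Lambda3 g = qspan {wedge3 a b c | a b c. a \<in> g \<and> b \<in> g \<and> c \<in> g}"

text \<open>Chevalley-Eilenberg differentials (trivial coefficients):
  d(a \<and> b) = - [a,b],
  d(a \<and> b \<and> c) = - [a,b] \<and> c + [a,c] \<and> b - [b,c] \<and> a.\<close>
definition d2 :: "('a::ab_group_add \<Rightarrow> 'a \<Rightarrow> int) \<Rightarrow> ('a \<times> 'a \<Rightarrow> rat) \<Rightarrow> 'a \<Rightarrow> rat" where
  "d2 B c = (\<lambda>w. (1/2) * (\<Sum>(x, y)\<in>supp c.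
      c (x, y) * (- br B (delta x) (delta y) w)))"

definition d3 :: "('a::ab_group_add \<Rightarrow> 'a \<Rightarrow> int) \<Rightarrow> ('a \<times> 'a \<times> 'a \<Rightarrow> rat) \<Rightarrow> 'a \<times> 'a \<Rightarrow> rat" where
  "d3 B t = (\<lambda>p. (1/6) * (\<Sum>(x, y, z)\<in>supp t. t (x, y, z) *
      (- wedge2 (br B (delta x) (delta y)) (delta z) p
       + wedge2 (br B (delta x) (delta z)) (delta y) p
       - wedge2 (br B (delta y) (delta z)) (delta x) p)))"

definition ext2 :: "(('a \<Rightarrow> rat) \<Rightarrow> ('a \<Rightarrow> rat)) \<Rightarrow> ('a \<times> 'a \<Rightarrow> rat) \<Rightarrow> 'a \<times> 'a \<Rightarrow> rat" where
  "ext2 phi c = (\<lambda>p. (1/2) * (\<Sum>(x, y)\<in>supp c.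
      c (x, y) * wedge2 (phi (delta x)) (phi (delta y)) p))"

end

theory Submission
  imports Defs
begin

definition fs :: "('b \<Rightarrow> rat) \<Rightarrow> bool" where "fs f = finite (supp f)"

definition dw :: "'a \<Rightarrow> 'a \<Rightarrow> 'a \<times> 'a \<Rightarrow> rat" where
  "dw p q = wedge2 (delta p) (delta q)"

lemma delta_apply: "delta x y = (if y = x then 1 else 0)" unfolding delta_def by (rule refl)
lemma wedge2_apply: "wedge2 a b (x, y) = a x * b y - a y * b x" unfolding wedge2_def by simp
lemma dw_apply: "dw p q (u, v) = (if u = p \<and> v = q then 1 else 0) - (if u = q \<and> v = p then 1 else 0)"
  unfolding dw_def wedge2_apply delta_apply by (cases "u = p"; cases "v = q"; cases "u = q"; cases "v = p"; simp)

lemma dw_swap: "dw q p = (\<lambda>t. - dw p q t)"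
  by (rule ext) (simp add: dw_def wedge2_def split: prod.splits)

lemma dw_same: "dw p p = (\<lambda>t. 0)"
  by (rule ext) (simp add: dw_def wedge2_def split: prod.splits)

lemma supp_delta: "supp (delta x) = {x}"
  by (auto simp: supp_def delta_apply)

lemma qspan_gen: "v \<in> S \<Longrightarrow> v \<in> qspan S"
proof -
  assume "v \<in> S"
  from qspan.add[OF this qspan.zero, of 1] show ?thesis by simp
qed

lemma qspan_comb: "v \<in> qspan S \<Longrightarrow> w \<in> qspan S \<Longrightarrow> (\<lambda>x. q * v x + w x) \<in> qspan S"
proof (induction v arbitrary: w rule: qspan.induct)
  case zero
  then show ?case by simp
next
  case (add s v r)
  have "(\<lambda>x. q * v x + w x) \<in> qspan S" using add by blast
  from qspan.add[OF add(1) this, of "q * r"]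
  show ?case by (simp add: algebra_simps)
qed

lemma qspan_sum: "finite I \<Longrightarrow> (\<forall>i\<in>I. F i \<in> qspan S) \<Longrightarrow> (\<lambda>x. \<Sum>i\<in>I. q i * F i x) \<in> qspan S"
proof (induction I rule: finite_induct)
  case empty
  then show ?case using qspan.zero by simp
next
  case (insert i I)
  then show ?case using qspan_comb[of "F i" S "\<lambda>x. \<Sum>i\<in>I. q i * F i x" "q i"] by simp
qed

lemma qspan_inv:
  assumes "P (\<lambda>_. 0)" "\<And>v w q. v \<in> S \<Longrightarrow> P w \<Longrightarrow> P (\<lambda>x. q * v x + w x)" "w \<in> qspan S"
  shows "P w"
  using assms(3) by (induction rule: qspan.induct) (auto intro: assms(1,2))

lemma supp_comb: "supp (\<lambda>x. q * v x + w x) \<subseteq> supp v \<union> supp w"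
  by (auto simp: supp_def)

lemma fs_comb: "fs v \<Longrightarrow> fs w \<Longrightarrow> fs (\<lambda>x. q * v x + w x)"
  unfolding fs_def by (rule finite_subset[OF supp_comb]) simp

lemma fs_zero: "fs (\<lambda>_. 0)" by (simp add: fs_def supp_def)

lemma qspan_fs: "(\<forall>v\<in>S. fs v) \<Longrightarrow> w \<in> qspan S \<Longrightarrow> fs w"
  by (rule qspan_inv[where P=fs]) (auto intro: fs_comb fs_zero)

lemma fs_sum: "finite I \<Longrightarrow> (\<forall>i\<in>I. fs (F i)) \<Longrightarrow> fs (\<lambda>x. \<Sum>i\<in>I. q i * F i x)"
proof (induction I rule: finite_induct)
  case empty
  then show ?case using fs_zero by simp
next
  case (insert i I)
  then show ?case using fs_comb[of "F i" "\<lambda>x. \<Sum>i\<in>I. q i * F i x" "q i"] by simp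
qed

lemma supp_wedge2: "supp (wedge2 a b) \<subseteq> (supp a \<union> supp b) \<times> (supp a \<union> supp b)"
  by (auto simp: supp_def wedge2_def)

lemma fs_wedge2: "fs a \<Longrightarrow> fs b \<Longrightarrow> fs (wedge2 a b)"
  unfolding fs_def by (rule finite_subset[OF supp_wedge2]) simp

lemma supp_wedge3: "supp (wedge3 a b c) \<subseteq> (supp a \<union> supp b \<union> supp c) \<times> (supp a \<union> supp b \<union> supp c) \<times> (supp a \<union> supp b \<union> supp c)"
  by (auto simp: supp_def wedge3_def)

lemma fs_wedge3: "fs a \<Longrightarrow> fs b \<Longrightarrow> fs c \<Longrightarrow> fs (wedge3 a b c)"
  unfolding fs_def by (rule finite_subset[OF supp_wedge3]) simp

lemma fs_QS: "f \<in> QS S \<Longrightarrow> fs f" by (simp add: QS_def fs_def)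

lemma fs_Lambda2: "z \<in> Lambda2 (QS S) \<Longrightarrow> fs z"
  unfolding Lambda2_def by (rule qspan_fs) (auto intro: fs_wedge2 fs_QS)

lemma fs_Lambda3: "z \<in> Lambda3 (QS S) \<Longrightarrow> fs z"
  unfolding Lambda3_def by (rule qspan_fs) (auto intro: fs_wedge3 fs_QS)

lemma fs_gK: "a \<in> gK \<Longrightarrow> fs a"
proof -
  have "fs (\<lambda>z. delta (x + y) z - delta x z - delta y z)" for x y :: 'a
  proof -
    have "supp (\<lambda>z. delta (x + y) z - delta x z - delta y z) \<subseteq> {x, y, x+y}"
      by (auto simp: supp_def delta_apply)
    then show ?thesis unfolding fs_def by (rule finite_subset) simp
  qed
  then show "a \<in> gK \<Longrightarrow> fs a" unfolding gK_def by (intro qspan_fs) auto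
qed

lemma fs_Lambda2gK: "z \<in> Lambda2 gK \<Longrightarrow> fs z"
  unfolding Lambda2_def by (rule qspan_fs) (auto intro: fs_wedge2 fs_gK)

definition alt :: "('a \<times> 'a \<Rightarrow> rat) \<Rightarrow> bool" where "alt c = (\<forall>x y. c (y, x) = - c (x, y))"

lemma alt_Lambda2: "z \<in> Lambda2 S \<Longrightarrow> alt z"
  unfolding Lambda2_def
proof (induction rule: qspan.induct)
  case zero
  then show ?case by (simp add: alt_def)
next
  case (add v w q)
  then obtain a b where "v = wedge2 a b" by blast
  then have av: "alt v" unfolding alt_def by (simp add: wedge2_apply)
  show ?case unfolding alt_def
  proof (intro allI)
    fix x y
    have "v (y, x) = - v (x, y)" "w (y, x) = - w (x, y)" using av add(3) unfolding alt_def by blast+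
    then show "q * v (y, x) + w (y, x) = - (q * v (x, y) + w (x, y))" by (simp add: algebra_simps)
  qed
qed

lemma supp_Lambda2: "z \<in> Lambda2 (QS S) \<Longrightarrow> supp z \<subseteq> S \<times> S"
  unfolding Lambda2_def
proof (induction rule: qspan.induct)
  case zero
  then show ?case by (simp add: supp_def)
next
  case (add v w q)
  then obtain a b where "v = wedge2 a b" "a \<in> QS S" "b \<in> QS S" by blast
  then have "supp v \<subseteq> S \<times> S" using supp_wedge2[of a b] by (auto simp: QS_def)
  then show ?case using supp_comb[of q v w] add by blast
qed



definition sop :: "rat \<Rightarrow> ('b \<Rightarrow> 'c \<Rightarrow> rat) \<Rightarrow> ('b \<Rightarrow> rat) \<Rightarrow> 'c \<Rightarrow> rat" where
  "sop k G c = (\<lambda>w. k * (\<Sum>p\<in>supp c. c p * G p w))"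

lemma sop_S: "finite S \<Longrightarrow> supp c \<subseteq> S \<Longrightarrow> sop k G c = (\<lambda>w. k * (\<Sum>p\<in>S. c p * G p w))"
  unfolding sop_def
  by (rule ext, rule arg_cong[where f="\<lambda>x. k * x"], rule sum.mono_neutral_left) (auto simp: supp_def)

lemma sop_lin:
  assumes "fs c1" "fs c2"
  shows "sop k G (\<lambda>p. q * c1 p + c2 p) = (\<lambda>w. q * sop k G c1 w + sop k G c2 w)"
proof -
  let ?S = "supp c1 \<union> supp c2"
  have f: "finite ?S" using assms by (simp add: fs_def)
  have "sop k G (\<lambda>p. q * c1 p + c2 p) = (\<lambda>w. k * (\<Sum>p\<in>?S. (q * c1 p + c2 p) * G p w))"
    by (rule sop_S[OF f]) (auto simp: supp_def)
  also have "\<dots> = (\<lambda>w. q * (k * (\<Sum>p\<in>?S. c1 p * G p w)) + k * (\<Sum>p\<in>?S. c2 p * G p w))"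
    by (simp add: algebra_simps sum.distrib sum_distrib_left)
  also have "\<dots> = (\<lambda>w. q * sop k G c1 w + sop k G c2 w)"
    using sop_S[OF f, of c1 k G] sop_S[OF f, of c2 k G] by auto
  finally show ?thesis .
qed

lemma sop_add: "fs f \<Longrightarrow> fs g \<Longrightarrow> sop k G (\<lambda>t. f t + g t) = (\<lambda>w. sop k G f w + sop k G g w)"
  using sop_lin[of f g k G 1] by simp

lemma sop_sub: "fs f \<Longrightarrow> fs g \<Longrightarrow> sop k G (\<lambda>t. f t - g t) = (\<lambda>w. sop k G f w - sop k G g w)"
  using sop_lin[of g f k G "-1"] by simp

lemma sop_scale: "fs f \<Longrightarrow> sop k G (\<lambda>t. q * f t) = (\<lambda>w. q * sop k G f w)"
  using sop_lin[of f "\<lambda>_. 0" k G q] by (simp add: fs_zero sop_def supp_def)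

lemma fs_add: "fs f \<Longrightarrow> fs g \<Longrightarrow> fs (\<lambda>t. f t + g t)"
  using fs_comb[of f g 1] by simp

lemma fs_sub: "fs f \<Longrightarrow> fs g \<Longrightarrow> fs (\<lambda>t. f t - g t)"
  using fs_comb[of g f "-1"] by simp

lemma fs_scale: "fs f \<Longrightarrow> fs (\<lambda>t. q * f t)"
  using fs_comb[of f "\<lambda>_. 0" q] by (simp add: fs_zero)

lemma sop_zero: "sop k G (\<lambda>_. 0) = (\<lambda>_. 0)"
  by (simp add: sop_def supp_def)

lemma sop_sum:
  "finite I \<Longrightarrow> (\<forall>i\<in>I. fs (F i)) \<Longrightarrow>
   sop k G (\<lambda>p. \<Sum>i\<in>I. q i * F i p) = (\<lambda>w. \<Sum>i\<in>I. q i * sop k G (F i) w)"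
proof (induction I rule: finite_induct)
  case empty
  then show ?case by (simp add: sop_zero)
next
  case (insert i I)
  have "fs (\<lambda>p. \<Sum>i\<in>I. q i * F i p)" using insert by (intro fs_sum) auto
  then show ?case using insert sop_lin[of "F i" "\<lambda>p. \<Sum>i\<in>I. q i * F i p" k G "q i"] by simp
qed

lemma d2_sop: "d2 B c = sop (1/2) (\<lambda>(x, y) w. - br B (delta x) (delta y) w) c"
  unfolding d2_def sop_def by (rule ext) (simp add: split_def)

lemma d3_sop: "d3 B c = sop (1/6) (\<lambda>(x, y, z) p.
      - wedge2 (br B (delta x) (delta y)) (delta z) p
       + wedge2 (br B (delta x) (delta z)) (delta y) p
       - wedge2 (br B (delta y) (delta z)) (delta x) p) c"
  unfolding d3_def sop_def by (rule ext) (simp add: split_def)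

lemma ext2_sop: "ext2 phi c = sop (1/2) (\<lambda>(x, y) p. wedge2 (phi (delta x)) (phi (delta y)) p) c"
  unfolding ext2_def sop_def by (rule ext) (simp add: split_def)

lemma br_delta: "br B (delta x) (delta (y::'a::ab_group_add)) = (\<lambda>z. if z = x + y then of_int (B x y) else 0)"
proof (rule ext)
  fix z
  have "br B (delta x) (delta y) z = delta y (z - x) * of_int (B x (z - x))"
    unfolding br_def supp_delta by (simp add: delta_apply)
  also have "\<dots> = (if z = x + y then of_int (B x y) else 0)"
  proof (cases "z = x + y")
    case True
    then show ?thesis by (simp add: delta_apply)
  next
    case False
    then have "z - x \<noteq> y" by (auto simp: algebra_simps)
    then show ?thesis using False by (simp add: delta_apply)
  qed
  finally show "br B (delta x) (delta y) z = (if z = x + y then of_int (B x y) else 0)" .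
qed

lemma br_delta': "br B (delta x) (delta (y::'a::ab_group_add)) = (\<lambda>z. of_int (B x y) * delta (x + y) z)"
  unfolding br_delta by (rule ext) (simp add: delta_apply)

lemma supp_dw: "supp (dw p q) \<subseteq> {(p, q), (q, p)}"
  by (auto simp: supp_def dw_apply split: if_splits)

lemma fs_dw: "fs (dw p q)"
  unfolding fs_def by (rule finite_subset[OF supp_dw]) simp

lemma wedge2_scaleL: "wedge2 (\<lambda>t. k * a t) b = (\<lambda>p. k * wedge2 a b p)"
  by (rule ext) (simp add: wedge2_def split_def algebra_simps)

lemma wedge2_zeroL: "wedge2 (\<lambda>t. 0) b = (\<lambda>p. 0)"
  by (rule ext) (simp add: wedge2_def split_def)

lemma wedge2_zeroR: "wedge2 a (\<lambda>t. 0) = (\<lambda>p. 0)"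
  by (rule ext) (simp add: wedge2_def split_def)



definition dwt :: "'a \<Rightarrow> 'a \<Rightarrow> 'a \<Rightarrow> 'a \<times> 'a \<times> 'a \<Rightarrow> rat" where
  "dwt a b c = wedge3 (delta a) (delta b) (delta c)"

lemma wedge3_apply: "wedge3 a b c (x, y, z) =
      a x * b y * c z + a y * b z * c x + a z * b x * c y
    - a x * b z * c y - a z * b y * c x - a y * b x * c z"
  unfolding wedge3_def by simp

lemma delta_prod3': "delta a x * delta b y * delta c z = delta (a, b, c) (x, y, z)"
  by (cases "x = a"; cases "y = b"; cases "z = c"; simp add: delta_apply)

lemma delta_perms:
  "delta (a, b, c) (y, z, x) = delta (c, a, b) (x, y, z)"
  "delta (a, b, c) (z, x, y) = delta (b, c, a) (x, y, z)"
  "delta (a, b, c) (x, z, y) = delta (a, c, b) (x, y, z)"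
  "delta (a, b, c) (z, y, x) = delta (c, b, a) (x, y, z)"
  "delta (a, b, c) (y, x, z) = delta (b, a, c) (x, y, z)"
  by (auto simp: delta_apply)

lemma delta_prod3: "delta a x * delta b y * delta c z = (if x = a \<and> y = b \<and> z = c then 1 else 0)"
  by (cases "x = a"; cases "y = b"; cases "z = c"; simp add: delta_apply)

locale bil =
  fixes B :: "'a::ab_group_add \<Rightarrow> 'a \<Rightarrow> int"
  assumes add_left: "\<And>x y z. B (x + y) z = B x z + B y z"
      and add_right: "\<And>x y z. B x (y + z) = B x y + B x z"
      and alternating: "\<And>x. B x x = 0"
begin

lemma B0L[simp]: "B 0 y = 0" using add_left[of 0 0 y] by simp
lemma B0R[simp]: "B x 0 = 0" using add_right[of x 0 0] by simp
lemma BnegL[simp]: "B (- x) y = - B x y" using add_left[of x "-x" y] by simp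
lemma BnegR[simp]: "B x (- y) = - B x y" using add_right[of x y "-y"] by simp
lemma BdiffL[simp]: "B (x - y) z = B x z - B y z" using add_left[of x "-y" z] by simp
lemma BdiffR[simp]: "B x (y - z) = B x y - B x z" using add_right[of x y "-z"] by simp
lemma BaddL[simp]: "B (x + y) z = B x z + B y z" by (rule add_left)
lemma BaddR[simp]: "B x (y + z) = B x y + B x z" by (rule add_right)
lemma Balt[simp]: "B x x = 0" by (rule alternating)
lemma Banti: "B y x = - B x y"
proof -
  have "B (x + y) (x + y) = B x x + B y x + (B x y + B y y)" by (simp only: add_left add_right)
  then show ?thesis unfolding alternating by simp
qed

lemma d2_dw: "d2 B (dw p q) = (\<lambda>w. - of_int (B p q) * delta (p + q) w)"
proof (cases "p = q")
  case True
  then show ?thesis by (simp add: dw_same d2_sop sop_zero)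
next
  case False
  have "d2 B (dw p q) = (\<lambda>w. 1/2 * (\<Sum>r\<in>{(p, q), (q, p)}. dw p q r * (case r of (x, y) \<Rightarrow> \<lambda>w. - br B (delta x) (delta y) w) w))"
    unfolding d2_sop by (rule sop_S) (simp, rule supp_dw)
  also have "\<dots> = (\<lambda>w. 1/2 * (- br B (delta p) (delta q) w + br B (delta q) (delta p) w))"
    using False by (simp add: dw_apply)
  also have "\<dots> = (\<lambda>w. - of_int (B p q) * delta (p + q) w)"
    by (rule ext) (simp add: br_delta' Banti[of q p] add.commute[of q p] algebra_simps)
  finally show ?thesis .
qed

lemma varpi1_delta: "varpi1 B (delta x) = (if x \<in> H1 B then delta x else (\<lambda>_. 0))"
  by (rule ext) (simp add: varpi1_def delta_apply)

lemma ext2_dw: "ext2 (varpi1 B) (dw p q) = (\<lambda>t. if p \<in> H1 B \<and> q \<in> H1 B then dw p q t else 0)"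
proof (cases "p = q")
  case True
  then have z: "dw p q = (\<lambda>t. 0)" by (simp add: dw_same)
  show ?thesis unfolding z by (simp add: ext2_sop sop_zero)
next
  case False
  have "ext2 (varpi1 B) (dw p q) = (\<lambda>w. 1/2 * (\<Sum>r\<in>{(p, q), (q, p)}. dw p q r * (case r of (x, y) \<Rightarrow> \<lambda>w. wedge2 (varpi1 B (delta x)) (varpi1 B (delta y)) w) w))"
    unfolding ext2_sop by (rule sop_S) (simp, rule supp_dw)
  also have "\<dots> = (\<lambda>w. 1/2 * (wedge2 (varpi1 B (delta p)) (varpi1 B (delta q)) w - wedge2 (varpi1 B (delta q)) (varpi1 B (delta p)) w))"
    using False by (simp add: dw_apply)
  also have "\<dots> = (\<lambda>t. if p \<in> H1 B \<and> q \<in> H1 B then dw p q t else 0)"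
    by (rule ext) (auto simp: varpi1_delta wedge2_zeroL wedge2_zeroR dw_def[symmetric] dw_swap[of p q])
  finally show ?thesis .
qed

definition F3 :: "'a \<Rightarrow> 'a \<Rightarrow> 'a \<Rightarrow> 'a \<times> 'a \<Rightarrow> rat" where
  "F3 a b c = (\<lambda>p. - of_int (B a b) * dw (a + b) c p + of_int (B a c) * dw (a + c) b p - of_int (B b c) * dw (b + c) a p)"

lemma d3_G: "(case (x, y, z) of (x, y, z) \<Rightarrow> \<lambda>p.
      - wedge2 (br B (delta x) (delta y)) (delta z) p
       + wedge2 (br B (delta x) (delta z)) (delta y) p
       - wedge2 (br B (delta y) (delta z)) (delta x) p) = F3 x y z"
  by (simp add: F3_def br_delta' wedge2_scaleL dw_def)

lemma F3_cyc: "F3 b c a = F3 a b c"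
  unfolding F3_def by (rule ext) (simp add: Banti[of b a] Banti[of c a] add.commute[of b a] add.commute[of c a])

lemma F3_sw: "F3 b a c = (\<lambda>p. - F3 a b c p)"
  unfolding F3_def by (rule ext) (simp add: Banti[of b a] add.commute[of b a] algebra_simps)

lemma sop_delta: "sop k G (delta s) = (\<lambda>w. k * G s w)"
proof -
  have "sop k G (delta s) = (\<lambda>w. k * (\<Sum>p\<in>{s}. delta s p * G p w))"
    by (rule sop_S) (simp_all add: supp_delta)
  then show ?thesis by (simp add: delta_apply)
qed

lemma d3_dwt: "d3 B (dwt a b c) = F3 a b c"
proof -
  have e: "dwt a b c = (\<lambda>t. delta (a,b,c) t + delta (b,c,a) t + delta (c,a,b) t - delta (a,c,b) t - delta (c,b,a) t - delta (b,a,c) t)"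
    by (rule ext) (auto simp: dwt_def wedge3_def delta_prod3' delta_perms)
  have fd: "fs (delta s)" for s :: "'a \<times> 'a \<times> 'a" by (simp add: fs_def supp_delta)
  have "d3 B (dwt a b c) = (\<lambda>w. 1/6 * F3 a b c w + 1/6 * F3 b c a w + 1/6 * F3 c a b w - 1/6 * F3 a c b w - 1/6 * F3 c b a w - 1/6 * F3 b a c w)"
    unfolding e d3_sop by (simp add: sop_add sop_sub fs_add fs_sub fd sop_delta F3_def br_delta' wedge2_scaleL dw_def)
  also have "\<dots> = F3 a b c"
  proof (rule ext)
    fix w
    have c1: "F3 b c a w = F3 a b c w" using F3_cyc[where a=a and b=b and c=c] by (rule fun_cong)
    have "F3 c a b = F3 a b c" using F3_cyc[where a=b and b=c and c=a] F3_cyc[where a=a and b=b and c=c] by (rule trans)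
    then have c2: "F3 c a b w = F3 a b c w" by (rule fun_cong)
    have s1: "F3 a c b w = - F3 a b c w" using fun_cong[OF F3_sw[where a=c and b=a and c=b], of w] c2 by simp
    have s2: "F3 c b a w = - F3 a b c w" using fun_cong[OF F3_sw[where a=b and b=c and c=a], of w] c1 by simp
    have s3: "F3 b a c w = - F3 a b c w" using fun_cong[OF F3_sw[where a=a and b=b and c=c], of w] by simp
    show "1/6 * F3 a b c w + 1/6 * F3 b c a w + 1/6 * F3 c a b w - 1/6 * F3 a c b w - 1/6 * F3 c b a w - 1/6 * F3 b a c w = F3 a b c w"
      unfolding c1 c2 s1 s2 s3 by simp
  qed
  finally show ?thesis .
qed

end


definition PP :: "'a::ab_group_add \<Rightarrow> 'a \<Rightarrow> 'a \<times> 'a \<Rightarrow> rat" where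
  "PP h t = dw t (h - t)"

lemma delta_QS: "x \<in> S \<Longrightarrow> delta x \<in> QS S"
  by (simp add: QS_def supp_delta)

context bil
begin

definition Bnd :: "('a \<times> 'a \<Rightarrow> rat) set" where
  "Bnd = {\<beta>. \<exists>W\<in>Lambda3 (QS (H1 B)). d3 B W = \<beta>}"

lemma Bnd_zero: "(\<lambda>_. 0) \<in> Bnd"
  unfolding Bnd_def Lambda3_def
  by (rule CollectI, rule bexI[of _ "\<lambda>_. 0"]) (simp_all add: d3_sop sop_zero qspan.zero)

lemma Bnd_comb: "\<beta>1 \<in> Bnd \<Longrightarrow> \<beta>2 \<in> Bnd \<Longrightarrow> (\<lambda>p. q * \<beta>1 p + \<beta>2 p) \<in> Bnd"
proof -
  assume "\<beta>1 \<in> Bnd" "\<beta>2 \<in> Bnd"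
  then obtain W1 W2 where W: "W1 \<in> Lambda3 (QS (H1 B))" "d3 B W1 = \<beta>1" "W2 \<in> Lambda3 (QS (H1 B))" "d3 B W2 = \<beta>2"
    unfolding Bnd_def by blast
  have "(\<lambda>x. q * W1 x + W2 x) \<in> Lambda3 (QS (H1 B))"
    using W unfolding Lambda3_def by (intro qspan_comb)
  moreover have "d3 B (\<lambda>x. q * W1 x + W2 x) = (\<lambda>p. q * d3 B W1 p + d3 B W2 p)"
    unfolding d3_sop by (rule sop_lin) (use W fs_Lambda3 in blast)+
  then have "d3 B (\<lambda>x. q * W1 x + W2 x) = (\<lambda>p. q * \<beta>1 p + \<beta>2 p)" using W by simp
  ultimately show ?thesis unfolding Bnd_def by blast
qed

lemma Bnd_cong: "\<beta> \<in> Bnd \<Longrightarrow> (\<And>p. \<beta> p = \<gamma> p) \<Longrightarrow> \<gamma> \<in> Bnd"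
proof -
  assume "\<beta> \<in> Bnd" "\<And>p. \<beta> p = \<gamma> p"
  then have "\<beta> = \<gamma>" by (rule_tac ext) simp
  then show "\<gamma> \<in> Bnd" using \<open>\<beta> \<in> Bnd\<close> by simp
qed

lemma Bnd_scale: "\<beta> \<in> Bnd \<Longrightarrow> (\<lambda>p. q * \<beta> p) \<in> Bnd"
  using Bnd_comb[OF _ Bnd_zero, of \<beta> q] by simp

lemma Bnd_add: "\<beta>1 \<in> Bnd \<Longrightarrow> \<beta>2 \<in> Bnd \<Longrightarrow> (\<lambda>p. \<beta>1 p + \<beta>2 p) \<in> Bnd"
  using Bnd_comb[of \<beta>1 \<beta>2 1] by simp

lemma Bnd_lin2: "\<beta>1 \<in> Bnd \<Longrightarrow> \<beta>2 \<in> Bnd \<Longrightarrow> (\<lambda>p. q1 * \<beta>1 p + q2 * \<beta>2 p) \<in> Bnd"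
  by (intro Bnd_comb Bnd_scale)

lemma Bnd_lin4: "\<beta>1 \<in> Bnd \<Longrightarrow> \<beta>2 \<in> Bnd \<Longrightarrow> \<beta>3 \<in> Bnd \<Longrightarrow> \<beta>4 \<in> Bnd \<Longrightarrow>
   (\<lambda>p. q1 * \<beta>1 p + (q2 * \<beta>2 p + (q3 * \<beta>3 p + q4 * \<beta>4 p))) \<in> Bnd"
  by (intro Bnd_comb Bnd_scale Bnd_lin2)

lemma inH1: "B x y \<noteq> 0 \<Longrightarrow> x \<in> H1 B"
  by (auto simp: H1_def kermu_def)

lemma inH1': "B y x \<noteq> 0 \<Longrightarrow> x \<in> H1 B"
  by (rule inH1[of x y]) (simp add: Banti[of y x])

lemma H1_ex: "x \<in> H1 B \<Longrightarrow> \<exists>y. B x y \<noteq> 0"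
  by (auto simp: H1_def kermu_def)

lemma notH1: "h \<notin> H1 B \<Longrightarrow> B h y = 0"
  by (auto simp: H1_def kermu_def)

lemma notH1': "h \<notin> H1 B \<Longrightarrow> B y h = 0"
proof -
  assume "h \<notin> H1 B"
  then have "B h y = 0" by (rule notH1)
  then show "B y h = 0" using Banti[of h y] by simp
qed

lemma Bnd_dwt: "a \<in> H1 B \<Longrightarrow> b \<in> H1 B \<Longrightarrow> c \<in> H1 B \<Longrightarrow> F3 a b c \<in> Bnd"
proof -
  assume H: "a \<in> H1 B" "b \<in> H1 B" "c \<in> H1 B"
  have "dwt a b c \<in> Lambda3 (QS (H1 B))"
    unfolding Lambda3_def dwt_def
  proof (rule qspan_gen, rule CollectI, intro exI conjI)
    show "wedge3 (delta a) (delta b) (delta c) = wedge3 (delta a) (delta b) (delta c)" by (rule refl)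
  qed (simp_all add: H delta_QS)
  then show ?thesis unfolding Bnd_def using d3_dwt by blast
qed

lemma D_rel:
  assumes "a \<in> H1 B" "b \<in> H1 B" "h - a - b \<in> H1 B"
  shows "(\<lambda>p. of_int (B a b) * (PP h a p + PP h b p - PP h (a + b) p)
              + of_int (B b h) * PP h a p - of_int (B a h) * PP h b p) \<in> Bnd"
proof (rule Bnd_cong[OF Bnd_dwt[OF assms]])
  fix p
  have e1: "dw (a + b) (h - a - b) = PP h (a + b)" by (simp add: PP_def diff_diff_eq)
  have e2: "dw (a + (h - a - b)) b = (\<lambda>t. - PP h b t)"
    by (simp add: PP_def dw_swap[of b "h - b"] algebra_simps)
  have e3: "dw (b + (h - a - b)) a = (\<lambda>t. - PP h a t)"
    by (simp add: PP_def dw_swap[of a "h - a"] algebra_simps)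
  have b1: "B a (h - a - b) = B a h - B a b" by simp
  have b2: "B b (h - a - b) = B b h + B a b" by (simp add: Banti[of b a])
  show "F3 a b (h - a - b) p = of_int (B a b) * (PP h a p + PP h b p - PP h (a + b) p)
              + of_int (B b h) * PP h a p - of_int (B a h) * PP h b p"
    unfolding F3_def e1 e2 e3 b1 b2 by (simp add: algebra_simps)
qed

end


lemma comb_id:
  fixes ab ah bh pa pb pab pbh pabh ph d :: rat
  assumes "ah \<noteq> 0" "bh \<noteq> 0" "d \<noteq> 0"
  shows "(1 + ab / ah) * (ab * (pa + pb - pab) + bh * pa - ah * pb) +
         (- (ab / ah) * ((ab + ah) * (pa + pbh - pabh) + bh * pa - ah * pbh) +
          (ab / ah * ab / bh * ((- bh) * (ph + pb - pbh) + bh * ph - 0 * pb) +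
           - (ab / ah) * (ab + ah) / d * ((- d) * (ph + pab - pabh) + d * ph - 0 * pab))) =
         bh * pa - ah * pb"
  using assms by (simp add: field_simps)

lemma comb_Z:
  fixes xb bh px pb pxb d :: rat
  assumes "bh \<noteq> 0" "d \<noteq> 0" "xb = d - bh"
  shows "1 / d * (xb * (px + pb - pxb) + bh * px - 0 * pb) + (- (xb / bh) / d) * (bh * pb - bh * pxb) = px"
  unfolding assms(3) using assms(1,2) by (simp add: field_simps)

lemma comb_C1:
  fixes a0 ax ay px py p0 :: rat
  assumes "ay \<noteq> 0"
  shows "a0 / ay * (ay * px - ax * py) + ax / ay * (a0 * py - ay * p0) = a0 * px - ax * p0"
  using assms by (simp add: field_simps)

context bil
begin

lemma G_rel:
  assumes pa: "B a h \<noteq> 0" and pb: "B b h \<noteq> 0" and pab: "B (a + b) h \<noteq> 0"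
  shows "(\<lambda>p. of_int (B b h) * PP h a p - of_int (B a h) * PP h b p) \<in> Bnd"
proof -
  have pab': "B a h + B b h \<noteq> 0" using pab by simp
  have hH: "h \<in> H1 B" by (rule inH1'[OF pa])
  have aH: "a \<in> H1 B" by (rule inH1[OF pa])
  have bH: "b \<in> H1 B" by (rule inH1[OF pb])
  have abH: "a + b \<in> H1 B" by (rule inH1[OF pab])
  have bhH: "b + h \<in> H1 B" by (rule inH1[of _ h]) (simp add: pb)
  have c1: "h - a - b \<in> H1 B" by (rule inH1[of _ h]) (use pab' in simp)
  have c2: "h - a - (b + h) \<in> H1 B" by (rule inH1[of _ h]) (use pab' in simp)
  have c3: "h - h - b \<in> H1 B" by (rule inH1[of _ h]) (use pb in simp)
  have c4: "h - h - (a + b) \<in> H1 B" by (rule inH1[of _ h]) (use pab' in simp)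
  note D1 = D_rel[OF aH bH c1]
  note D2 = D_rel[OF aH bhH c2]
  have e1: "h + b = b + h" by (simp add: add.commute)
  have e2: "h + (a + b) = a + (b + h)" by (simp add: algebra_simps)
  note D3 = D_rel[OF hH bH c3, unfolded e1]
  note D4 = D_rel[OF hH abH c4, unfolded e2]
  define k where "k = (of_int (B a b) :: rat) / of_int (B a h)"
  define q1 where "q1 = 1 + k"
  define q2 where "q2 = - k"
  define q3 where "q3 = k * of_int (B a b) / of_int (B b h)"
  define q4 where "q4 = - k * (of_int (B a b) + of_int (B a h)) / (of_int (B a h) + of_int (B b h))"
  show ?thesis
  proof (rule Bnd_cong[OF Bnd_lin4[OF D1 D2 D3 D4, of q1 q2 q3 q4]])
    fix p
    have r1: "(of_int (B a h) :: rat) \<noteq> 0" using pa by simp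
    have r2: "(of_int (B b h) :: rat) \<noteq> 0" using pb by simp
    have r3: "(of_int (B a h) + of_int (B b h) :: rat) \<noteq> 0" using pab' by (simp flip: of_int_add)
    show "q1 * (of_int (B a b) * (PP h a p + PP h b p - PP h (a + b) p) + of_int (B b h) * PP h a p - of_int (B a h) * PP h b p) +
         (q2 * (of_int (B a (b + h)) * (PP h a p + PP h (b + h) p - PP h (a + (b + h)) p) + of_int (B (b + h) h) * PP h a p - of_int (B a h) * PP h (b + h) p) +
          (q3 * (of_int (B h b) * (PP h h p + PP h b p - PP h (b + h) p) + of_int (B b h) * PP h h p - of_int (B h h) * PP h b p) +
           q4 * (of_int (B h (a + b)) * (PP h h p + PP h (a + b) p - PP h (a + (b + h)) p) + of_int (B (a + b) h) * PP h h p - of_int (B h h) * PP h (a + b) p))) =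
         of_int (B b h) * PP h a p - of_int (B a h) * PP h b p"
    proof -
      have f1: "(of_int (B a (b + h)) :: rat) = of_int (B a b) + of_int (B a h)" by simp
      have f2: "(of_int (B (b + h) h) :: rat) = of_int (B b h)" by simp
      have f3: "(of_int (B h b) :: rat) = - of_int (B b h)" by (simp add: Banti[of h b])
      have f4: "(of_int (B h (a + b)) :: rat) = - (of_int (B a h) + of_int (B b h))"
        by (simp add: Banti[of h a] Banti[of h b])
      have f5: "(of_int (B (a + b) h) :: rat) = of_int (B a h) + of_int (B b h)" by simp
      have f6: "(of_int (B h h) :: rat) = 0" by simp
      show ?thesis unfolding q1_def q2_def q3_def q4_def k_def f1 f2 f3 f4 f5 f6
        by (rule comb_id[OF r1 r2 r3])
    qed
  qed
qed

lemma Z_rel: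
  assumes hH: "h \<in> H1 B" and xH: "x \<in> H1 B" and hxH: "h - x \<in> H1 B" and z: "B x h = 0"
  shows "PP h x \<in> Bnd"
proof -
  obtain y0 where "B h y0 \<noteq> 0" using H1_ex[OF hH] by blast
  then have x0: "B y0 h \<noteq> 0" by (simp add: Banti[of y0 h])
  obtain u where "B (h - x) u \<noteq> 0" using H1_ex[OF hxH] by blast
  then have u: "B (x - h) u \<noteq> 0" by simp
  obtain b where b1: "B b h \<noteq> 0" and b2: "B (x - h) b \<noteq> 0"
  proof (cases "B (x - h) y0 = 0")
    case False
    then show ?thesis using that x0 by blast
  next
    case True
    show ?thesis
    proof (cases "B u h = 0")
      case False
      then show ?thesis using that u by blast
    next
      case True2: True
      have "B (y0 + u) h \<noteq> 0" using x0 True2 by simp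
      moreover have "B (x - h) (y0 + u) \<noteq> 0" using True u by simp
      ultimately show ?thesis using that by blast
    qed
  qed
  have bH: "b \<in> H1 B" by (rule inH1[OF b1])
  have c1: "h - x - b \<in> H1 B" by (rule inH1[of _ h]) (use b1 z in simp)
  note D = D_rel[OF xH bH c1]
  have g1: "B (x + b) h \<noteq> 0" using b1 z by simp
  have g2: "B (b + (x + b)) h \<noteq> 0" using b1 z by simp
  note G = G_rel[OF b1 g1 g2]
  have r1: "(of_int (B b h) :: rat) \<noteq> 0" using b1 by simp
  have r2: "(of_int (B x b) + of_int (B b h) :: rat) \<noteq> 0" using b2 by (simp add: Banti[of h b] flip: of_int_add)
  show ?thesis
  proof (rule Bnd_cong[OF Bnd_lin2[OF D G, of "1 / (of_int (B x b) + of_int (B b h))" "- (of_int (B x b) / of_int (B b h)) / (of_int (B x b) + of_int (B b h))"]])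
    fix p
    have f1: "(of_int (B (x + b) h) :: rat) = of_int (B b h)" using z by simp
    have f2: "(of_int (B x h) :: rat) = 0" using z by simp
    show "1 / (of_int (B x b) + of_int (B b h)) * (of_int (B x b) * (PP h x p + PP h b p - PP h (x + b) p) + of_int (B b h) * PP h x p - of_int (B x h) * PP h b p) +
        - (of_int (B x b) / of_int (B b h)) / (of_int (B x b) + of_int (B b h)) * (of_int (B (x + b) h) * PP h b p - of_int (B b h) * PP h (x + b) p) = PP h x p"
      unfolding f1 f2 by (rule comb_Z[OF r1 r2]) simp
  qed
qed

lemma C1_rel:
  assumes x0: "B x0 h \<noteq> 0" and xH: "x \<in> H1 B" and hxH: "h - x \<in> H1 B"
  shows "(\<lambda>p. of_int (B x0 h) * PP h x p - of_int (B x h) * PP h x0 p) \<in> Bnd"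
proof (cases "B x h = 0")
  case True
  have hH: "h \<in> H1 B" by (rule inH1'[OF x0])
  have "(\<lambda>p. of_int (B x0 h) * PP h x p) \<in> Bnd" by (rule Bnd_scale[OF Z_rel[OF hH xH hxH True]])
  then show ?thesis using True by simp
next
  case False
  show ?thesis
  proof (cases "B (x + x0) h = 0")
    case False2: False
    show ?thesis by (rule G_rel[OF False x0 False2])
  next
    case True
    let ?y = "x0 + x0"
    have y1: "B ?y h \<noteq> 0" using x0 by simp
    have y2: "B (x + ?y) h \<noteq> 0" using x0 True by simp
    have y3: "B (?y + x0) h \<noteq> 0" using x0 by simp
    note G1 = G_rel[OF False y1 y2]
    note G2 = G_rel[OF y1 x0 y3]
    have r: "(of_int (B ?y h) :: rat) \<noteq> 0" using y1 by simp
    show ?thesis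
    proof (rule Bnd_cong[OF Bnd_lin2[OF G1 G2, of "of_int (B x0 h) / of_int (B ?y h)" "of_int (B x h) / of_int (B ?y h)"]])
      fix p
      show "of_int (B x0 h) / of_int (B ?y h) * (of_int (B ?y h) * PP h x p - of_int (B x h) * PP h ?y p) +
          of_int (B x h) / of_int (B ?y h) * (of_int (B x0 h) * PP h ?y p - of_int (B ?y h) * PP h x0 p) =
          of_int (B x0 h) * PP h x p - of_int (B x h) * PP h x0 p"
        by (rule comb_C1[OF r])
    qed
  qed
qed

end


lemma mem_cong: "v \<in> S \<Longrightarrow> (\<And>p. v p = w p) \<Longrightarrow> w \<in> S"
proof -
  assume "v \<in> S" "\<And>p. v p = w p"
  then have "v = w" by (rule_tac ext) simp
  then show "w \<in> S" using \<open>v \<in> S\<close> by simp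
qed

lemma d2_add: "fs f \<Longrightarrow> fs g \<Longrightarrow> d2 B (\<lambda>t. f t + g t) = (\<lambda>w. d2 B f w + d2 B g w)"
  unfolding d2_sop by (rule sop_add)
lemma d2_sub: "fs f \<Longrightarrow> fs g \<Longrightarrow> d2 B (\<lambda>t. f t - g t) = (\<lambda>w. d2 B f w - d2 B g w)"
  unfolding d2_sop by (rule sop_sub)
lemma d2_scale: "fs f \<Longrightarrow> d2 B (\<lambda>t. q * f t) = (\<lambda>w. q * d2 B f w)"
  unfolding d2_sop by (rule sop_scale)
lemma ext2_add: "fs f \<Longrightarrow> fs g \<Longrightarrow> ext2 phi (\<lambda>t. f t + g t) = (\<lambda>w. ext2 phi f w + ext2 phi g w)"
  unfolding ext2_sop by (rule sop_add)
lemma ext2_sub: "fs f \<Longrightarrow> fs g \<Longrightarrow> ext2 phi (\<lambda>t. f t - g t) = (\<lambda>w. ext2 phi f w - ext2 phi g w)"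
  unfolding ext2_sop by (rule sop_sub)
lemma ext2_scale: "fs f \<Longrightarrow> ext2 phi (\<lambda>t. q * f t) = (\<lambda>w. q * ext2 phi f w)"
  unfolding ext2_sop by (rule sop_scale)

lemma gen_e: "(\<lambda>z. delta (x + y) z - delta x z - delta y z) \<in> {(\<lambda>z. delta (x + y) z - delta x z - delta y z) | x y. True}"
  by blast

context bil
begin

lemma Bnd_lin3: "\<beta>1 \<in> Bnd \<Longrightarrow> \<beta>2 \<in> Bnd \<Longrightarrow> \<beta>3 \<in> Bnd \<Longrightarrow>
   (\<lambda>p. q1 * \<beta>1 p + (q2 * \<beta>2 p + q3 * \<beta>3 p)) \<in> Bnd"
  by (intro Bnd_comb Bnd_scale Bnd_lin2)

lemma KM_rel:
  assumes hK: "h \<notin> H1 B" and xH: "x \<in> H1 B"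
  shows "(\<lambda>p. 2 * PP h x p - PP h (x + x) p) \<in> Bnd"
proof -
  obtain u where u: "B x u \<noteq> 0" using H1_ex[OF xH] by blast
  have hz: "B y h = 0" for y using notH1'[OF hK] .
  have hz2: "B h y = 0" for y using notH1[OF hK] .
  have ux: "B u x = - B x u" by (rule Banti)
  have uH: "u \<in> H1 B" by (rule inH1'[OF u])
  have a1H: "x + x - u \<in> H1 B" by (rule inH1[of _ x]) (simp add: ux u)
  have c1: "h - (x + x - u) - u \<in> H1 B" by (rule inH1[of _ u]) (simp add: hz2 u)
  have xuH: "x - u \<in> H1 B" by (rule inH1[of _ x]) (simp add: ux u)
  have c2: "h - x - (x - u) \<in> H1 B" by (rule inH1[of _ u]) (simp add: hz2 u)
  have c3: "h - (x - u) - u \<in> H1 B" by (rule inH1[of _ u]) (simp add: hz2 u)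
  have e1: "x + x - u + u = x + x" by simp
  have e2: "x + (x - u) = x + x - u" by (simp add: algebra_simps)
  have e3: "x - u + u = x" by simp
  note D1 = D_rel[OF a1H uH c1, unfolded e1]
  note D2 = D_rel[OF xH xuH c2, unfolded e2]
  note D3 = D_rel[OF xuH uH c3, unfolded e3]
  have t: "(of_int (B x u) :: rat) \<noteq> 0" using u by simp
  show ?thesis
  proof (rule Bnd_cong[OF Bnd_lin3[OF D1 D2 D3, of "1 / (2 * of_int (B x u))" "- 1 / of_int (B x u)" "- 1 / of_int (B x u)"]])
    fix p
    have f1: "(of_int (B (x + x - u) u) :: rat) = 2 * of_int (B x u)" by simp
    have f2: "(of_int (B x (x - u)) :: rat) = - of_int (B x u)" by simp
    have f3: "(of_int (B (x - u) u) :: rat) = of_int (B x u)" by simp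
    show "1 / (2 * of_int (B x u)) * (of_int (B (x + x - u) u) * (PP h (x + x - u) p + PP h u p - PP h (x + x) p) + of_int (B u h) * PP h (x + x - u) p - of_int (B (x + x - u) h) * PP h u p) +
        (- 1 / of_int (B x u) * (of_int (B x (x - u)) * (PP h x p + PP h (x - u) p - PP h (x + x - u) p) + of_int (B (x - u) h) * PP h x p - of_int (B x h) * PP h (x - u) p) +
         - 1 / of_int (B x u) * (of_int (B (x - u) u) * (PP h (x - u) p + PP h u p - PP h x p) + of_int (B u h) * PP h (x - u) p - of_int (B (x - u) h) * PP h u p)) =
        2 * PP h x p - PP h (x + x) p"
      unfolding f1 f2 f3 hz using t by (simp add: field_simps)
  qed
qed

lemma KM_lift:
  assumes hK: "h \<notin> H1 B" and xH: "x \<in> H1 B" and hxH: "h - x \<in> H1 B"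
  shows "\<exists>C\<in>Lambda2 gK. d2 B C = (\<lambda>_. 0) \<and> (\<lambda>p. ext2 (varpi1 B) C p - PP h x p) \<in> Bnd"
proof -
  obtain u where u: "B x u \<noteq> 0" using H1_ex[OF xH] by blast
  have hz: "B y h = 0" for y using notH1'[OF hK] .
  have hz2: "B h y = 0" for y using notH1[OF hK] .
  have xxH: "x + x \<in> H1 B" by (rule inH1[of _ u]) (simp add: u)
  have hxxH: "h - x - x \<in> H1 B" by (rule inH1[of _ u]) (simp add: u hz2)
  have hpxH: "h + x \<in> H1 B" by (rule inH1[of _ u]) (simp add: u hz2)
  define a where "a = (\<lambda>t. delta x t - 1/2 * delta (x + x) t)"
  define b where "b = (\<lambda>t. delta (h - x) t - 1/2 * delta (h - x - x) t - 1/2 * delta h t)"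
  have aK: "a \<in> gK"
    unfolding gK_def
    by (rule mem_cong[OF qspan.add[OF gen_e[of x x] qspan.zero, where q="-1/2"]]) (simp add: a_def algebra_simps)
  have bK: "b \<in> gK"
  proof -
    have i1: "h - x - x + x = h - x" by simp
    have i2: "h - x + x = h" by simp
    show ?thesis unfolding gK_def
      by (rule mem_cong[OF qspan.add[OF gen_e[of "h - x - x" x, unfolded i1] qspan.add[OF gen_e[of "h - x" x, unfolded i2] qspan.zero, where q="-1/2"], where q="1/2"]])
        (simp add: b_def algebra_simps)
  qed
  define C where "C = (\<lambda>p. 2/3 * wedge2 a b p)"
  have CK: "C \<in> Lambda2 gK"
    unfolding Lambda2_def C_def
    by (rule mem_cong[OF qspan.add[of "wedge2 a b", OF _ qspan.zero, where q="2/3"]]) (use aK bK in blast, simp)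
  have expn: "C = (\<lambda>p. 2/3 * (dw x (h - x) p - 1/2 * dw x (h - x - x) p - 1/2 * dw x h p - 1/2 * dw (x + x) (h - x) p
      + 1/4 * dw (x + x) (h - x - x) p + 1/4 * dw (x + x) h p))"
  proof (rule ext)
    fix p :: "'a \<times> 'a"
    obtain s t where p: "p = (s, t)" by (cases p)
    show "C p = 2/3 * (dw x (h - x) p - 1/2 * dw x (h - x - x) p - 1/2 * dw x h p - 1/2 * dw (x + x) (h - x) p
      + 1/4 * dw (x + x) (h - x - x) p + 1/4 * dw (x + x) h p)"
      unfolding p C_def a_def b_def dw_def wedge2_apply by (simp add: algebra_simps)
  qed
  have d2C: "d2 B C = (\<lambda>_. 0)"
    unfolding expn by (simp only: d2_add d2_sub d2_scale fs_add fs_sub fs_scale fs_dw) (simp add: d2_dw hz)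
  have extC: "ext2 (varpi1 B) C = (\<lambda>p. 2/3 * (dw x (h - x) p - 1/2 * dw x (h - x - x) p - 1/2 * dw (x + x) (h - x) p
      + 1/4 * dw (x + x) (h - x - x) p))"
    unfolding expn by (simp only: ext2_add ext2_sub ext2_scale fs_add fs_sub fs_scale fs_dw) (simp add: ext2_dw xH hxH xxH hxxH hK)
  have Z1: "PP (h - x) x \<in> Bnd"
    by (rule Z_rel) (simp_all add: hxH xH hxxH hz)
  have Z2: "PP (h + x) (x + x) \<in> Bnd"
  proof (rule Z_rel)
    show "h + x - (x + x) \<in> H1 B" using hxH by (simp add: algebra_simps)
  qed (simp_all add: hpxH xxH hz)
  note K = KM_rel[OF hK xH]
  have "(\<lambda>p. ext2 (varpi1 B) C p - PP h x p) \<in> Bnd"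
  proof (rule Bnd_cong[OF Bnd_lin3[OF K Z1 Z2, of "-1/6" "-1/3" "-1/3"]])
    fix p
    have g1: "PP (h - x) x = dw x (h - x - x)" by (simp add: PP_def)
    have g2: "PP (h + x) (x + x) = dw (x + x) (h - x)" by (simp add: PP_def algebra_simps)
    have g3: "PP h (x + x) = dw (x + x) (h - x - x)" by (simp add: PP_def algebra_simps)
    show "-1/6 * (2 * PP h x p - PP h (x + x) p) + (-1/3 * PP (h - x) x p + -1/3 * PP (h + x) (x + x) p) =
        ext2 (varpi1 B) C p - PP h x p"
      unfolding extC g1 g2 g3 by (simp add: PP_def algebra_simps)
  qed
  then show ?thesis using CK d2C by blast
qed

end


lemma t1: "(z :: 'b \<times> 'b \<Rightarrow> rat) q * (if u = fst q \<and> v = snd q then 1 else 0) = (if q = (u, v) then z q else 0)"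
proof (cases "q = (u, v)")
  case True
  then show ?thesis by simp
next
  case False
  then have nc: "\<not> (u = fst q \<and> v = snd q)" by auto
  show ?thesis by (simp only: if_not_P[OF nc] if_not_P[OF False] mult_zero_right)
qed

lemma t2: "(z :: 'b \<times> 'b \<Rightarrow> rat) q * (if u = snd q \<and> v = fst q then 1 else 0) = (if q = (v, u) then z q else 0)"
proof (cases "q = (v, u)")
  case True
  then show ?thesis by simp
next
  case False
  then have nc: "\<not> (u = snd q \<and> v = fst q)" by auto
  show ?thesis by (simp only: if_not_P[OF nc] if_not_P[OF False] mult_zero_right)
qed

lemma expand:
  assumes fz: "fs z" and az: "alt z"
  shows "z = (\<lambda>p. \<Sum>q\<in>supp z. (1/2 * z q) * dw (fst q) (snd q) p)"
proof (rule ext)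
  fix p :: "'a \<times> 'a"
  obtain u v where p: "p = (u, v)" by (cases p)
  let ?S = "supp z"
  have fin: "finite ?S" using fz by (simp add: fs_def)
  have s1: "(\<Sum>q\<in>?S. if q = P then z q else 0) = z P" for P
  proof -
    have "(\<Sum>q\<in>?S. if q = P then z q else 0) = (if P \<in> ?S then z P else 0)" using fin by simp
    also have "\<dots> = z P" by (auto simp: supp_def)
    finally show ?thesis .
  qed
  have "(\<Sum>q\<in>?S. (1/2 * z q) * dw (fst q) (snd q) p)
      = (\<Sum>q\<in>?S. 1/2 * (if q = (u, v) then z q else 0) - 1/2 * (if q = (v, u) then z q else 0))"
  proof (rule sum.cong[OF refl])
    fix q
    have "(1/2 * z q) * dw (fst q) (snd q) p = 1/2 * (z q * (if u = fst q \<and> v = snd q then 1 else 0)) - 1/2 * (z q * (if u = snd q \<and> v = fst q then 1 else 0))"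
      unfolding p dw_apply by (simp only: algebra_simps)
    then show "(1/2 * z q) * dw (fst q) (snd q) p = 1/2 * (if q = (u, v) then z q else 0) - 1/2 * (if q = (v, u) then z q else 0)"
      by (simp only: t1 t2)
  qed
  also have "\<dots> = 1/2 * z (u, v) - 1/2 * z (v, u)"
    by (simp only: sum_subtractf sum_distrib_left[symmetric] s1)
  also have "\<dots> = z p"
  proof -
    have "z (v, u) = - z (u, v)" using az unfolding alt_def by blast
    then show ?thesis unfolding p by simp
  qed
  finally show "z p = (\<Sum>q\<in>?S. (1/2 * z q) * dw (fst q) (snd q) p)" by simp
qed

context bil
begin

definition R :: "'a \<Rightarrow> 'a \<times> 'a \<Rightarrow> rat" where
  "R h = (if h \<in> H1 B then (\<lambda>p. PP h (SOME x0. B x0 h \<noteq> 0) p / of_int (B (SOME x0. B x0 h \<noteq> 0) h)) else (\<lambda>_. 0))"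

lemma zero_L2: "(\<lambda>_. 0) \<in> Lambda2 gK"
  unfolding Lambda2_def by (rule qspan.zero)

lemma Key0:
  assumes xH: "x \<in> H1 B" and yH: "y \<in> H1 B"
  shows "\<exists>C\<in>Lambda2 gK. d2 B C = (\<lambda>_. 0) \<and>
           (\<lambda>p. ext2 (varpi1 B) C p + of_int (B x y) * R (x + y) p - dw x y p) \<in> Bnd"
proof -
  let ?h = "x + y"
  have hx: "?h - x = y" by simp
  have hxH: "?h - x \<in> H1 B" using yH by simp
  have PPe: "PP ?h x = dw x y" by (simp add: PP_def)
  show ?thesis
  proof (cases "?h \<in> H1 B")
    case True
    obtain y0 where "B ?h y0 \<noteq> 0" using H1_ex[OF True] by blast
    then have "B y0 ?h \<noteq> 0" by (simp only: Banti[of y0 "?h"])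
    then have x0: "B (SOME x0. B x0 ?h \<noteq> 0) ?h \<noteq> 0" by (rule someI)
    define x0 where "x0 = (SOME x0. B x0 ?h \<noteq> 0)"
    have x0': "B x0 ?h \<noteq> 0" using x0 unfolding x0_def .
    have Rh: "R ?h = (\<lambda>p. PP ?h x0 p / of_int (B x0 ?h))" using True by (simp add: R_def x0_def)
    note C1 = C1_rel[OF x0' xH hxH]
    have r: "(of_int (B x0 ?h) :: rat) \<noteq> 0" using x0' by simp
    have "(\<lambda>p. ext2 (varpi1 B) (\<lambda>_. 0) p + of_int (B x y) * R (x + y) p - dw x y p) \<in> Bnd"
    proof (rule Bnd_cong[OF Bnd_scale[OF C1, of "- 1 / of_int (B x0 ?h)"]])
      fix p
      have bx: "(of_int (B x ?h) :: rat) = of_int (B x y)" by simp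
      show "- 1 / of_int (B x0 ?h) * (of_int (B x0 ?h) * PP ?h x p - of_int (B x ?h) * PP ?h x0 p) =
          ext2 (varpi1 B) (\<lambda>_. 0) p + of_int (B x y) * R (x + y) p - dw x y p"
        unfolding Rh PPe bx using r by (simp add: ext2_sop sop_zero field_simps)
    qed
    moreover have "d2 B (\<lambda>_. 0) = (\<lambda>_. 0)" by (simp add: d2_sop sop_zero)
    ultimately show ?thesis using zero_L2 by blast
  next
    case False
    obtain C where C: "C \<in> Lambda2 gK" "d2 B C = (\<lambda>_. 0)" "(\<lambda>p. ext2 (varpi1 B) C p - PP ?h x p) \<in> Bnd"
      using KM_lift[OF False xH hxH] by blast
    have "(\<lambda>p. ext2 (varpi1 B) C p + of_int (B x y) * R (x + y) p - dw x y p) \<in> Bnd"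
      by (rule Bnd_cong[OF C(3)]) (simp add: R_def False PPe)
    then show ?thesis using C by blast
  qed
qed

lemma Key:
  assumes xH: "x \<in> H1 B" and yH: "y \<in> H1 B"
  shows "\<exists>CW. fst CW \<in> Lambda2 gK \<and> d2 B (fst CW) = (\<lambda>_. 0) \<and> snd CW \<in> Lambda3 (QS (H1 B)) \<and>
     dw x y = (\<lambda>p. ext2 (varpi1 B) (fst CW) p - d3 B (snd CW) p + of_int (B x y) * R (x + y) p)"
proof -
  obtain C where C: "C \<in> Lambda2 gK" "d2 B C = (\<lambda>_. 0)"
    and Cb: "(\<lambda>p. ext2 (varpi1 B) C p + of_int (B x y) * R (x + y) p - dw x y p) \<in> Bnd"
    using Key0[OF xH yH] by blast
  obtain W where W: "W \<in> Lambda3 (QS (H1 B))" "d3 B W = (\<lambda>p. ext2 (varpi1 B) C p + of_int (B x y) * R (x + y) p - dw x y p)"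
    using Cb unfolding Bnd_def by blast
  have "dw x y = (\<lambda>p. ext2 (varpi1 B) C p - d3 B W p + of_int (B x y) * R (x + y) p)"
    unfolding W(2) by (rule ext) simp
  then show ?thesis using C W by (intro exI[of _ "(C, W)"]) simp
qed

lemma cycle_sum:
  assumes fz: "fs z" and dz: "d2 B z = (\<lambda>_. 0)"
  shows "(\<Sum>i\<in>supp z. (1/2 * z i) * (of_int (B (fst i) (snd i)) * R (fst i + snd i) p)) = 0"
proof -
  let ?S = "supp z"
  let ?s = "\<lambda>i. fst i + snd i"
  have fin: "finite ?S" using fz by (simp add: fs_def)
  have c0: "(\<Sum>i\<in>?S. z i * (if w = ?s i then of_int (B (fst i) (snd i)) else 0)) = 0" for w
  proof -
    have "d2 B z w = 1/2 * (\<Sum>i\<in>?S. z i * (- (if w = ?s i then of_int (B (fst i) (snd i)) else 0)))"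
      unfolding d2_def by (simp add: br_delta split_def)
    then have "(\<Sum>i\<in>?S. z i * (- (if w = ?s i then (of_int (B (fst i) (snd i)) :: rat) else 0))) = 0"
      using dz by (simp add: fun_eq_iff)
    then show ?thesis by (simp add: sum_negf)
  qed
  have c1: "(\<Sum>i\<in>{i. i \<in> ?S \<and> ?s i = h}. z i * of_int (B (fst i) (snd i))) = 0" for h
  proof -
    have "(\<Sum>i\<in>{i. i \<in> ?S \<and> ?s i = h}. z i * of_int (B (fst i) (snd i)))
        = (\<Sum>i\<in>?S. if ?s i = h then z i * of_int (B (fst i) (snd i)) else 0)"
      using sum.inter_filter[OF fin, of "\<lambda>i. z i * of_int (B (fst i) (snd i))" "\<lambda>i. ?s i = h"] by simp
    also have "\<dots> = (\<Sum>i\<in>?S. z i * (if h = ?s i then of_int (B (fst i) (snd i)) else 0))"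
      by (rule sum.cong) auto
    finally show ?thesis using c0[of h] by simp
  qed
  have "(\<Sum>i\<in>?S. (1/2 * z i) * (of_int (B (fst i) (snd i)) * R (?s i) p))
      = (\<Sum>h\<in>?s ` ?S. \<Sum>i\<in>{i. i \<in> ?S \<and> ?s i = h}. (1/2 * z i) * (of_int (B (fst i) (snd i)) * R (?s i) p))"
    by (rule sum.image_gen[OF fin])
  also have "\<dots> = (\<Sum>h\<in>?s ` ?S. 1/2 * R h p * (\<Sum>i\<in>{i. i \<in> ?S \<and> ?s i = h}. z i * of_int (B (fst i) (snd i))))"
  proof (rule sum.cong[OF refl])
    fix h assume "h \<in> ?s ` ?S"
    have "(\<Sum>i\<in>{i. i \<in> ?S \<and> ?s i = h}. (1/2 * z i) * (of_int (B (fst i) (snd i)) * R (?s i) p))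
        = (\<Sum>i\<in>{i. i \<in> ?S \<and> ?s i = h}. 1/2 * R h p * (z i * of_int (B (fst i) (snd i))))"
      by (rule sum.cong) (auto simp: algebra_simps)
    then show "(\<Sum>i\<in>{i. i \<in> ?S \<and> ?s i = h}. (1/2 * z i) * (of_int (B (fst i) (snd i)) * R (?s i) p))
        = 1/2 * R h p * (\<Sum>i\<in>{i. i \<in> ?S \<and> ?s i = h}. z i * of_int (B (fst i) (snd i)))"
      by (simp add: sum_distrib_left)
  qed
  also have "\<dots> = 0" using c1 by simp
  finally show ?thesis .
qed

end


theorem theorem5p1:
  fixes B :: "'a::ab_group_add \<Rightarrow> 'a \<Rightarrow> int"
  assumes add_left: "\<And>x y z. B (x + y) z = B x z + B y z"
      and add_right: "\<And>x y z. B x (y + z) = B x y + B x z"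
      and alternating: "\<And>x. B x x = 0"
      and nonzero: "\<exists>x y. B x y \<noteq> 0"
  shows "\<forall>z\<in>Lambda2 (QS (H1 B)). d2 B z = (\<lambda>_. 0) \<longrightarrow>
           (\<exists>c\<in>Lambda2 gK. d2 B c = (\<lambda>_. 0) \<and>
              (\<exists>w\<in>Lambda3 (QS (H1 B)).
                  d3 B w = (\<lambda>p. ext2 (varpi1 B) c p - z p)))"
proof -
  interpret bil B by unfold_locales (fact add_left add_right alternating)+
  show ?thesis
  proof (intro ballI impI)
    fix z assume zL: "z \<in> Lambda2 (QS (H1 B))" and dz: "d2 B z = (\<lambda>_. 0)"
    have fz: "fs z" by (rule fs_Lambda2[OF zL])
    have az: "alt z" by (rule alt_Lambda2[OF zL])
    have sz: "supp z \<subseteq> H1 B \<times> H1 B" by (rule supp_Lambda2[OF zL])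
    let ?S = "supp z"
    have fin: "finite ?S" using fz by (simp add: fs_def)
    have "\<forall>q\<in>?S. \<exists>CW. fst CW \<in> Lambda2 gK \<and> d2 B (fst CW) = (\<lambda>_. 0) \<and> snd CW \<in> Lambda3 (QS (H1 B)) \<and>
       dw (fst q) (snd q) = (\<lambda>p. ext2 (varpi1 B) (fst CW) p - d3 B (snd CW) p + of_int (B (fst q) (snd q)) * R (fst q + snd q) p)"
    proof
      fix q assume "q \<in> ?S"
      then have "fst q \<in> H1 B" "snd q \<in> H1 B" using sz by auto
      then show "\<exists>CW. fst CW \<in> Lambda2 gK \<and> d2 B (fst CW) = (\<lambda>_. 0) \<and> snd CW \<in> Lambda3 (QS (H1 B)) \<and>
       dw (fst q) (snd q) = (\<lambda>p. ext2 (varpi1 B) (fst CW) p - d3 B (snd CW) p + of_int (B (fst q) (snd q)) * R (fst q + snd q) p)"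
        by (rule Key)
    qed
    then obtain f where f: "\<forall>q\<in>?S. fst (f q) \<in> Lambda2 gK \<and> d2 B (fst (f q)) = (\<lambda>_. 0) \<and> snd (f q) \<in> Lambda3 (QS (H1 B)) \<and>
       dw (fst q) (snd q) = (\<lambda>p. ext2 (varpi1 B) (fst (f q)) p - d3 B (snd (f q)) p + of_int (B (fst q) (snd q)) * R (fst q + snd q) p)"
      by (rule bchoice[elim_format]) blast
    define CC where "CC q = fst (f q)" for q
    define WW where "WW q = snd (f q)" for q
    have CCL: "\<forall>q\<in>?S. CC q \<in> Lambda2 gK" using f by (simp add: CC_def)
    have CCd: "\<forall>q\<in>?S. d2 B (CC q) = (\<lambda>_. 0)" using f by (simp add: CC_def)
    have WWL: "\<forall>q\<in>?S. WW q \<in> Lambda3 (QS (H1 B))" using f by (simp add: WW_def)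
    have fe: "\<forall>q\<in>?S. dw (fst q) (snd q) = (\<lambda>p. ext2 (varpi1 B) (CC q) p - d3 B (WW q) p + of_int (B (fst q) (snd q)) * R (fst q + snd q) p)"
      using f by (simp add: CC_def WW_def)
    have CCf: "\<forall>q\<in>?S. fs (CC q)" using CCL fs_Lambda2gK by blast
    have WWf: "\<forall>q\<in>?S. fs (WW q)" using WWL fs_Lambda3 by blast
    define c where "c = (\<lambda>p. \<Sum>q\<in>?S. (1/2 * z q) * CC q p)"
    define w where "w = (\<lambda>p. \<Sum>q\<in>?S. (1/2 * z q) * WW q p)"
    have cL: "c \<in> Lambda2 gK"
      unfolding c_def Lambda2_def using qspan_sum[OF fin, where F=CC and q="\<lambda>q. 1/2 * z q"] CCL
      unfolding Lambda2_def by blast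
    have wL: "w \<in> Lambda3 (QS (H1 B))"
      unfolding w_def Lambda3_def using qspan_sum[OF fin, where F=WW and q="\<lambda>q. 1/2 * z q"] WWL
      unfolding Lambda3_def by blast
    have d2c: "d2 B c = (\<lambda>t. \<Sum>q\<in>?S. (1/2 * z q) * d2 B (CC q) t)"
      unfolding c_def d2_sop by (rule sop_sum[OF fin CCf])
    have d2c0: "d2 B c = (\<lambda>_. 0)"
      unfolding d2c using CCd by simp
    have extc: "ext2 (varpi1 B) c = (\<lambda>t. \<Sum>q\<in>?S. (1/2 * z q) * ext2 (varpi1 B) (CC q) t)"
      unfolding c_def ext2_sop by (rule sop_sum[OF fin CCf])
    have d3w: "d3 B w = (\<lambda>t. \<Sum>q\<in>?S. (1/2 * z q) * d3 B (WW q) t)"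
      unfolding w_def d3_sop by (rule sop_sum[OF fin WWf])
    have "d3 B w = (\<lambda>p. ext2 (varpi1 B) c p - z p)"
    proof (rule ext)
      fix p
      have "z p = (\<Sum>q\<in>?S. (1/2 * z q) * dw (fst q) (snd q) p)"
        by (subst expand[OF fz az]) (rule refl)
      also have "\<dots> = (\<Sum>q\<in>?S. (1/2 * z q) * ext2 (varpi1 B) (CC q) p - (1/2 * z q) * d3 B (WW q) p
           + (1/2 * z q) * (of_int (B (fst q) (snd q)) * R (fst q + snd q) p))"
        by (rule sum.cong[OF refl]) (simp add: fe algebra_simps)
      also have "\<dots> = (\<Sum>q\<in>?S. (1/2 * z q) * ext2 (varpi1 B) (CC q) p - (1/2 * z q) * d3 B (WW q) p)
           + (\<Sum>q\<in>?S. (1/2 * z q) * (of_int (B (fst q) (snd q)) * R (fst q + snd q) p))"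
        by (rule sum.distrib)
      also have "\<dots> = ((\<Sum>q\<in>?S. (1/2 * z q) * ext2 (varpi1 B) (CC q) p) - (\<Sum>q\<in>?S. (1/2 * z q) * d3 B (WW q) p)) + 0"
        by (simp only: sum_subtractf cycle_sum[OF fz dz])
      also have "\<dots> = ext2 (varpi1 B) c p - d3 B w p"
        unfolding extc d3w by simp
      finally show "d3 B w p = ext2 (varpi1 B) c p - z p" by simp
    qed
    then show "\<exists>c\<in>Lambda2 gK. d2 B c = (\<lambda>_. 0) \<and>
              (\<exists>w\<in>Lambda3 (QS (H1 B)). d3 B w = (\<lambda>p. ext2 (varpi1 B) c p - z p))"
      using cL d2c0 wL by blast
  qed
qed


end
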